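(* Let $p\in(0,1)$, $q=1-p$, $\alpha\in(0,1)$. Let $\{N(t)\}_{t\in\mathbb{N}_0}$ be the Bernoulli counting process with parameter $p$, i.e. $N(t)=\max\{n\in\mathbb{N}_0:M_0+\dots+M_{n-1}\le t\}$ with $M_0,M_1,\dots$ i.i.d., $P(M_i=k)=pq^{k-1}$, $k\in\mathbb{N}$. Let $\{L_\alpha(t)\}_{t\in\mathbb{N}_0}$ be an independent Sibuya counting process: $L_\alpha(t)=\max\{n\in\mathbb{N}_0:Z_1+\dots+Z_n\le t\}$ with $Z_j$ i.i.d., $P(Z_j=k)=(-1)^{k-1}\binom{\alpha}{k}$, $k\in\mathbb{N}$. Let $\{N_A(t)\}_{t\in\mathbb{N}_0}$ be the fractional Bernoulli counting process of type A: $N_A(t)=\max\{n\in\mathbb{N}_0:J^A_0+\dots+J^A_{n-1}\le t\}$, where $J^A_0,J^A_1,\dots$ are i.i.d. with the discrete Mittag--Leffler distribution of type A, i.e. $J^A\overset{d}{=}\sum_{k=1}^MZ_k$ with $M$ geometric, $P(M=k)=pq^{k-1}$, independent of the i.i.d. Sibuya$(\alpha)$ variables $Z_k$; equivalently $\mathbb{E}u^{J^A}=\dfrac{1-(1-u)^\alpha}{1+\frac{q}{p}(1-u)^\alpha}$. Then for each $t\in\mathbb{N}_0$, $N_A(t)\overset{d}{=}N(L_\alpha(t))$.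
   Context: $\mathbb{N}_0=\mathbb{N}\cup\{0\}$; $\binom{\alpha}{k}=\alpha(\alpha-1)\cdots(\alpha-k+1)/k!$; empty sums are $0$. *)

theory Defs
  imports "HOL-Probability.Probability"
begin

definition geom1_pmf :: "real \<Rightarrow> nat pmf" where
  "geom1_pmf p = embed_pmf (\<lambda>k. if k \<ge> 1 then p * (1 - p) ^ (k - 1) else 0)"

definition sibuya_pmf :: "real \<Rightarrow> nat pmf" where
  "sibuya_pmf \<alpha> = embed_pmf (\<lambda>k. if k \<ge> 1 then (-1) ^ (k - 1) * (\<alpha> gchoose k) else 0)"

fun sum_iid_pmf :: "nat pmf \<Rightarrow> nat \<Rightarrow> nat pmf" where
  "sum_iid_pmf d 0 = return_pmf 0"
| "sum_iid_pmf d (Suc n) = bind_pmf d (\<lambda>x. map_pmf (\<lambda>y. x + y) (sum_iid_pmf d n))"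

definition dml_A_pmf :: "real \<Rightarrow> real \<Rightarrow> nat pmf" where
  "dml_A_pmf p \<alpha> = bind_pmf (geom1_pmf p) (\<lambda>m. sum_iid_pmf (sibuya_pmf \<alpha>) m)"

definition count_proc :: "nat stream \<Rightarrow> nat \<Rightarrow> nat" where
  "count_proc \<omega> t = Max {n. (\<Sum>i<n. \<omega> !! i) \<le> t}"

end

theory Submission
  imports Defs
begin

lemma geom1_valid:
  assumes "0 < p" "p < 1"
  shows "(\<integral>\<^sup>+x. ennreal (if x \<ge> 1 then p * (1 - p) ^ (x - 1) else 0) \<partial>count_space UNIV) = 1"
proof -
  have s: "(\<lambda>k. p * (1 - p) ^ k) sums (p * (1 / (1 - (1 - p))))"
    by (rule sums_mult, rule geometric_sums) (use assms in auto)
  have s2: "(\<lambda>k::nat. if k \<ge> 1 then p * (1 - p) ^ (k - 1) else 0) sums 1"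
    using sums_Suc[where f="\<lambda>k::nat. if k \<ge> 1 then p * (1 - p) ^ (k - 1) else 0" and l=1] s assms
    by auto
  show ?thesis
    apply (subst nn_integral_count_space_nat)
    apply (subst suminf_ennreal2)
    using s2 assms by (auto simp: sums_iff)
qed

lemma pmf_geom1: assumes "0 < p" "p < 1"
  shows "pmf (geom1_pmf p) k = (if k \<ge> 1 then p * (1 - p) ^ (k - 1) else 0)"
  unfolding geom1_pmf_def
  by (rule pmf_embed_pmf) (use assms geom1_valid in auto)

lemma gchoose_Suc_rec: "(a::real) gchoose (Suc m) = (a gchoose m) * (a - of_nat m) / (of_nat m + 1)"
proof -
  have "fact (Suc m) * (a gchoose Suc m) = fact m * (a gchoose m) * (a - of_nat m)"
    unfolding gbinomial_mult_fact by (simp add: prod.atLeast0_lessThan_Suc del: fact_Suc)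
  then have "fact m * ((a gchoose Suc m) * (of_nat m + 1)) = fact m * ((a gchoose m) * (a - of_nat m))"
    by (simp add: algebra_simps)
  then have "(a gchoose Suc m) * (of_nat m + 1) = (a gchoose m) * (a - of_nat m)"
    by (subst (asm) mult_left_cancel) auto
  then show ?thesis by (simp add: field_simps)
qed

lemma sib_Q: "(-1::real)^m * ((\<alpha> - 1) gchoose m) = (\<Prod>j<m. 1 - \<alpha> / (real j + 1))"
proof (induction m)
  case (Suc m)
  have "(-1::real)^Suc m * ((\<alpha> - 1) gchoose Suc m) = ((-1)^m * ((\<alpha> - 1) gchoose m)) * (1 - \<alpha> / (real m + 1))"
    by (simp add: gchoose_Suc_rec field_simps)
  then show ?case using Suc by simp
qed simp

lemma Q_tendsto:
  assumes "0 < \<alpha>" "\<alpha> < 1"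
  shows "(\<lambda>m. \<Prod>j<m. 1 - \<alpha> / (real j + 1)) \<longlonglongrightarrow> 0"
proof (rule tendsto_sandwich[where f="\<lambda>_. 0" and h="\<lambda>m. exp (- \<alpha> * harm m)"])
  show "\<forall>\<^sub>F m in sequentially. 0 \<le> (\<Prod>j<m. 1 - \<alpha> / (real j + 1))"
    using assms by (auto intro!: prod_nonneg always_eventually simp: field_simps)
  have "(\<Prod>j<m. 1 - \<alpha> / (real j + 1)) \<le> exp (- \<alpha> * harm m)" for m
  proof -
    have "(\<Prod>j<m. 1 - \<alpha> / (real j + 1)) \<le> (\<Prod>j<m. exp (- (\<alpha> / (real j + 1))))"
      apply (rule prod_mono)
      using assms exp_ge_add_one_self[of "- (\<alpha> / (real _ + 1))"]
      by (auto simp: field_simps)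
    also have "\<dots> = exp (- \<alpha> * harm m)"
      by (simp add: exp_sum[symmetric] harm_altdef sum_distrib_left sum_negf field_simps)
    finally show ?thesis .
  qed
  then show "\<forall>\<^sub>F m in sequentially. (\<Prod>j<m. 1 - \<alpha> / (real j + 1)) \<le> exp (- \<alpha> * harm m)"
    by auto
  have "filterlim (\<lambda>m. \<alpha> * harm m) at_top sequentially"
    using assms by (intro filterlim_tendsto_pos_mult_at_top[OF tendsto_const] harm_at_top) auto
  then have "filterlim (\<lambda>m. - (\<alpha> * harm m)) at_bot sequentially"
    by (simp add: filterlim_uminus_at_top)
  then show "(\<lambda>m. exp (- \<alpha> * harm m)) \<longlonglongrightarrow> 0"
    using filterlim_compose[OF exp_at_bot] by auto
qed simp

lemma sibuya_valid:
  assumes "0 < \<alpha>" "\<alpha> < 1"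
  shows "(\<integral>\<^sup>+x. ennreal (if x \<ge> 1 then (-1) ^ (x - 1) * (\<alpha> gchoose x) else 0) \<partial>count_space UNIV) = 1"
    and "\<And>x. 0 \<le> (if x \<ge> 1 then (-1::real) ^ (x - 1) * (\<alpha> gchoose x) else 0)"
proof -
  define f where "f = (\<lambda>x::nat. if x \<ge> 1 then (-1::real) ^ (x - 1) * (\<alpha> gchoose x) else 0)"
  define Q where "Q = (\<lambda>m. \<Prod>j<m. 1 - \<alpha> / (real j + 1))"
  have ps: "(\<Sum>k<Suc m. f k) = 1 - Q m" for m
  proof -
    have "(\<Sum>k<Suc m. f k) = - (\<Sum>k\<le>m. (\<alpha> gchoose k) * (- 1) ^ k) + 1"
    proof -
      have "(\<Sum>k<Suc m. f k) = (\<Sum>k\<le>m. (if k = 0 then 1 else 0) - (\<alpha> gchoose k) * (- 1) ^ k)"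
        unfolding f_def lessThan_Suc_atMost
        by (rule sum.cong) (auto simp: power_eq_if not_le)
      also have "\<dots> = 1 - (\<Sum>k\<le>m. (\<alpha> gchoose k) * (- 1) ^ k)"
        by (simp add: sum_subtractf)
      finally show ?thesis by simp
    qed
    also have "\<dots> = 1 - Q m"
      unfolding gbinomial_sum_lower_neg Q_def sib_Q by simp
    finally show ?thesis .
  qed
  have Qnn: "0 \<le> Q m" for m
    using assms unfolding Q_def by (auto simp: field_simps intro!: prod_nonneg)
  have Qdec: "Q (Suc m) \<le> Q m" for m
  proof -
    have "Q (Suc m) = Q m * (1 - \<alpha> / (real m + 1))" by (simp add: Q_def)
    also have "\<dots> \<le> Q m * 1"
      using assms Qnn[of m] by (intro mult_left_mono) auto
    finally show ?thesis by simp
  qed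
  have fnn: "0 \<le> f x" for x
  proof (cases x)
    case (Suc m)
    have "f x = (\<Sum>k<Suc (Suc m). f k) - (\<Sum>k<Suc m. f k)" using Suc by simp
    also have "\<dots> = Q m - Q (Suc m)" by (simp only: ps)
    finally show ?thesis using Qdec by simp
  qed (simp add: f_def)
  then show "\<And>x. 0 \<le> (if x \<ge> 1 then (-1::real) ^ (x - 1) * (\<alpha> gchoose x) else 0)"
    unfolding f_def by auto
  have "(\<lambda>m. \<Sum>k<Suc m. f k) \<longlonglongrightarrow> 1 - 0"
    unfolding ps Q_def by (intro tendsto_intros Q_tendsto assms)
  then have "(\<lambda>m. \<Sum>k<m. f k) \<longlonglongrightarrow> 1"
    using LIMSEQ_imp_Suc[where f="\<lambda>m. \<Sum>k<m. f k" and l=1] by simp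
  then have "f sums 1" by (simp add: sums_def)
  then show "(\<integral>\<^sup>+x. ennreal (if x \<ge> 1 then (-1) ^ (x - 1) * (\<alpha> gchoose x) else 0) \<partial>count_space UNIV) = 1"
    apply (subst nn_integral_count_space_nat)
    apply (subst suminf_ennreal2)
    using fnn by (auto simp: sums_iff f_def)
qed

lemma sum_iid_add:
  "sum_iid_pmf d (m + n) = bind_pmf (sum_iid_pmf d m) (\<lambda>u. map_pmf (\<lambda>v. u + v) (sum_iid_pmf d n))"
proof (induction m)
  case 0
  have "(+) (0::nat) = id" by auto
  then show ?case by (simp add: bind_return_pmf pmf.map_id)
next
  case (Suc m)
  show ?case
    by (simp add: Suc bind_assoc_pmf map_bind_pmf bind_map_pmf pmf.map_comp o_def add.assoc cong: bind_pmf_cong pmf.map_cong)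
qed

lemma sum_iid_bind:
  "sum_iid_pmf (bind_pmf g (\<lambda>m. sum_iid_pmf s m)) k =
     bind_pmf (sum_iid_pmf g k) (\<lambda>b. sum_iid_pmf s b)"
proof (induction k)
  case 0
  then show ?case by (simp add: bind_return_pmf)
next
  case (Suc k)
  have "sum_iid_pmf (bind_pmf g (\<lambda>m. sum_iid_pmf s m)) (Suc k) =
     bind_pmf g (\<lambda>x. bind_pmf (sum_iid_pmf s x) (\<lambda>u. bind_pmf (sum_iid_pmf g k) (\<lambda>b. map_pmf ((+) u) (sum_iid_pmf s b))))"
    by (simp add: Suc bind_assoc_pmf map_bind_pmf)
  also have "\<dots> = bind_pmf g (\<lambda>x. bind_pmf (sum_iid_pmf g k) (\<lambda>b. bind_pmf (sum_iid_pmf s x) (\<lambda>u. map_pmf ((+) u) (sum_iid_pmf s b))))"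
    by (subst bind_commute_pmf) simp
  also have "\<dots> = bind_pmf (sum_iid_pmf g (Suc k)) (\<lambda>b. sum_iid_pmf s b)"
    by (simp add: sum_iid_add bind_assoc_pmf bind_map_pmf)
  finally show ?case .
qed

lemma set_sum_iid:
  assumes "set_pmf d \<subseteq> {1..}"
  shows "set_pmf (sum_iid_pmf d n) \<subseteq> {n..}"
  using assms by (induction n) (auto, fastforce)

lemma meas_S[measurable]: fixes d :: "nat pmf" shows "(\<lambda>\<omega>. \<Sum>i<k. \<omega> !! i) \<in> measurable (stream_space (measure_pmf d)) (count_space UNIV)"
proof (induction k)
  case 0
  then show ?case by simp
next
  case (Suc k)
  have "(\<lambda>\<omega>. (\<lambda>a \<omega>. a + \<omega> !! k) (\<Sum>i<k. \<omega> !! i) \<omega>) \<in> measurable (stream_space (measure_pmf d)) (count_space UNIV)"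
  proof (rule measurable_compose_countable'[OF _ Suc.IH])
    show "(\<lambda>\<omega>. a + \<omega> !! k) \<in> measurable (stream_space (measure_pmf d)) (count_space UNIV)" for a
      by (rule measurable_compose[OF measurable_snth]) simp
  qed simp
  then show ?case by simp
qed

lemma meas_comp_S:
  fixes d :: "nat pmf"
  assumes "\<And>a. f a \<in> borel_measurable (stream_space (measure_pmf d))"
  shows "(\<lambda>\<omega>. f (\<Sum>i<k. \<omega> !! i) (sdrop k \<omega>)) \<in> borel_measurable (stream_space (measure_pmf d))"
proof (rule measurable_compose_countable'[where f="\<lambda>a \<omega>. f a (sdrop k \<omega>)" and I=UNIV])
  show "\<And>i. (\<lambda>\<omega>. f i (sdrop k \<omega>)) \<in> borel_measurable (stream_space (measure_pmf d))"
    using assms by (rule measurable_compose[rotated]) measurable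
qed (auto intro: meas_S countableI_type)


lemma stream_decomp:
  fixes d :: "nat pmf" and f :: "nat \<Rightarrow> nat stream \<Rightarrow> ennreal"
  assumes "\<And>a. f a \<in> borel_measurable (stream_space (measure_pmf d))"
  shows "(\<integral>\<^sup>+\<omega>. f (\<Sum>i<k. \<omega> !! i) (sdrop k \<omega>) \<partial>stream_space (measure_pmf d)) =
         (\<integral>\<^sup>+a. (\<integral>\<^sup>+\<omega>. f a \<omega> \<partial>stream_space (measure_pmf d)) \<partial>measure_pmf (sum_iid_pmf d k))"
  using assms
proof (induction k arbitrary: f)
  case 0
  then show ?case by simp
next
  case (Suc k)
  have "(\<integral>\<^sup>+\<omega>. f (\<Sum>i<Suc k. \<omega> !! i) (sdrop (Suc k) \<omega>) \<partial>stream_space (measure_pmf d)) =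
     (\<integral>\<^sup>+x. (\<integral>\<^sup>+\<omega>. f (\<Sum>i<Suc k. (x ## \<omega>) !! i) (sdrop (Suc k) (x ## \<omega>)) \<partial>stream_space (measure_pmf d)) \<partial>measure_pmf d)"
    by (rule prob_space.nn_integral_stream_space[OF prob_space_measure_pmf])
       (rule meas_comp_S[OF Suc.prems])
  also have "\<dots> = (\<integral>\<^sup>+x. (\<integral>\<^sup>+\<omega>. f (x + (\<Sum>i<k. \<omega> !! i)) (sdrop k \<omega>) \<partial>stream_space (measure_pmf d)) \<partial>measure_pmf d)"
    by (simp only: sum.lessThan_Suc_shift) simp
  also have "\<dots> = (\<integral>\<^sup>+x. (\<integral>\<^sup>+a. (\<integral>\<^sup>+\<omega>. f (x + a) \<omega> \<partial>stream_space (measure_pmf d)) \<partial>measure_pmf (sum_iid_pmf d k)) \<partial>measure_pmf d)"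
    by (rule nn_integral_cong, rule Suc.IH) (rule Suc.prems)
  also have "\<dots> = (\<integral>\<^sup>+a. (\<integral>\<^sup>+\<omega>. f a \<omega> \<partial>stream_space (measure_pmf d)) \<partial>measure_pmf (sum_iid_pmf d (Suc k)))"
    by simp
  finally show ?case .
qed

lemma ps_stream: "prob_space (stream_space (measure_pmf d))"
  by (rule prob_space.prob_space_stream_space[OF prob_space_measure_pmf])

lemma S_mono:
  fixes \<omega> :: "nat stream"
  shows "m \<le> n \<Longrightarrow> (\<Sum>i<m. \<omega> !! i) \<le> (\<Sum>i<n. \<omega> !! i)"
  by (rule sum_mono2) auto

lemma S_ge:
  fixes \<omega> :: "nat stream"
  assumes "\<forall>i. 1 \<le> \<omega> !! i"
  shows "n \<le> (\<Sum>i<n. \<omega> !! i)"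
proof -
  have "(\<Sum>i<n. (1::nat)) \<le> (\<Sum>i<n. \<omega> !! i)" by (rule sum_mono) (use assms in auto)
  then show ?thesis by simp
qed

lemma count_ge:
  assumes "\<forall>i. 1 \<le> \<omega> !! i"
  shows "n \<le> count_proc \<omega> s \<longleftrightarrow> (\<Sum>i<n. \<omega> !! i) \<le> s"
proof -
  let ?A = "{n. (\<Sum>i<n. \<omega> !! i) \<le> s}"
  have fin: "finite ?A"
    by (rule finite_subset[of _ "{..s}"]) (use S_ge[OF assms] in \<open>auto intro: order_trans\<close>)
  have ne: "?A \<noteq> {}" by (auto intro!: exI[of _ 0])
  have "n \<le> Max ?A \<longleftrightarrow> (\<exists>m\<in>?A. n \<le> m)" by (rule Max_ge_iff[OF fin ne])
  also have "\<dots> \<longleftrightarrow> (\<Sum>i<n. \<omega> !! i) \<le> s"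
    using S_mono[of n _ \<omega>] by (auto intro: order_trans)
  finally show ?thesis unfolding count_proc_def .
qed

lemma count_eq:
  assumes "\<forall>i. 1 \<le> \<omega> !! i"
  shows "count_proc \<omega> s = k \<longleftrightarrow> (\<Sum>i<k. \<omega> !! i) \<le> s \<and> s < (\<Sum>i<k. \<omega> !! i) + \<omega> !! k"
proof -
  have "count_proc \<omega> s = k \<longleftrightarrow> k \<le> count_proc \<omega> s \<and> \<not> Suc k \<le> count_proc \<omega> s" by auto
  also have "\<dots> \<longleftrightarrow> (\<Sum>i<k. \<omega> !! i) \<le> s \<and> s < (\<Sum>i<k. \<omega> !! i) + \<omega> !! k"
    unfolding count_ge[OF assms] by auto
  finally show ?thesis .
qed

lemma meas_cnt[measurable]:
  fixes d :: "nat pmf"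
  shows "(\<lambda>\<zeta>. count_proc \<zeta> t) \<in> measurable (stream_space (measure_pmf d)) (count_space UNIV)"
  unfolding count_proc_def by measurable

lemma AE_pos:
  fixes d :: "nat pmf"
  assumes "set_pmf d \<subseteq> {1..}"
  shows "AE \<omega> in stream_space (measure_pmf d). \<forall>i. 1 \<le> \<omega> !! i"
proof -
  have "AE \<omega> in stream_space (measure_pmf d). stream_all (\<lambda>x. 1 \<le> x) \<omega>"
    by (rule prob_space.AE_stream_all[OF prob_space_measure_pmf]) (use assms in \<open>auto simp: AE_measure_pmf_iff\<close>)
  then show ?thesis unfolding stream_all_def by simp
qed

lemma pmf_swap:
  fixes q :: "nat pmf"
  assumes "\<And>b. f b \<in> borel_measurable M"
  shows "(\<integral>\<^sup>+x. (\<integral>\<^sup>+b. f b x \<partial>measure_pmf q) \<partial>M) = (\<integral>\<^sup>+b. (\<integral>\<^sup>+x. f b x \<partial>M) \<partial>measure_pmf q)"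
proof -
  have "(\<integral>\<^sup>+x. (\<integral>\<^sup>+b. f b x \<partial>measure_pmf q) \<partial>M) = (\<integral>\<^sup>+x. (\<Sum>b. ennreal (pmf q b) * f b x) \<partial>M)"
    by (simp add: nn_integral_measure_pmf nn_integral_count_space_nat)
  also have "\<dots> = (\<Sum>b. (\<integral>\<^sup>+x. ennreal (pmf q b) * f b x \<partial>M))"
    by (rule nn_integral_suminf) (use assms in simp)
  also have "\<dots> = (\<Sum>b. ennreal (pmf q b) * (\<integral>\<^sup>+x. f b x \<partial>M))"
    by (subst nn_integral_cmult) (use assms in simp_all)
  also have "\<dots> = (\<integral>\<^sup>+b. (\<integral>\<^sup>+x. f b x \<partial>M) \<partial>measure_pmf q)"
    by (simp add: nn_integral_measure_pmf nn_integral_count_space_nat)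
  finally show ?thesis .
qed

lemma shd_int:
  fixes d :: "nat pmf" and g :: "nat \<Rightarrow> ennreal"
  shows "(\<integral>\<^sup>+\<omega>. g (shd \<omega>) \<partial>stream_space (measure_pmf d)) = (\<integral>\<^sup>+x. g x \<partial>measure_pmf d)"
proof -
  interpret S: prob_space "stream_space (measure_pmf d)" by (rule ps_stream)
  have "(\<integral>\<^sup>+\<omega>. g (shd \<omega>) \<partial>stream_space (measure_pmf d)) =
        (\<integral>\<^sup>+x. (\<integral>\<^sup>+\<omega>. g (shd (x ## \<omega>)) \<partial>stream_space (measure_pmf d)) \<partial>measure_pmf d)"
    by (rule prob_space.nn_integral_stream_space[OF prob_space_measure_pmf]) measurable
  also have "\<dots> = (\<integral>\<^sup>+x. g x \<partial>measure_pmf d)"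
    by (simp add: S.emeasure_space_1)
  finally show ?thesis .
qed

lemma H1:
  fixes d :: "nat pmf"
  assumes "set_pmf d \<subseteq> {1..}"
  shows "(\<integral>\<^sup>+\<omega>. indicator {k} (count_proc \<omega> s) \<partial>stream_space (measure_pmf d)) =
    (\<integral>\<^sup>+a. (\<integral>\<^sup>+x. (if a \<le> s \<and> s < a + x then 1 else 0) \<partial>measure_pmf d) \<partial>measure_pmf (sum_iid_pmf d k))"
proof -
  have "(\<integral>\<^sup>+\<omega>. indicator {k} (count_proc \<omega> s) \<partial>stream_space (measure_pmf d)) =
     (\<integral>\<^sup>+\<omega>. (\<lambda>a \<omega>'. if a \<le> s \<and> s < a + shd \<omega>' then 1 else 0) (\<Sum>i<k. \<omega> !! i) (sdrop k \<omega>) \<partial>stream_space (measure_pmf d))"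
    by (rule nn_integral_cong_AE, use AE_pos[OF assms] in eventually_elim)
       (auto simp: count_eq split: split_indicator)
  also have "\<dots> = (\<integral>\<^sup>+a. (\<integral>\<^sup>+\<omega>'. (if a \<le> s \<and> s < a + shd \<omega>' then 1 else 0) \<partial>stream_space (measure_pmf d)) \<partial>measure_pmf (sum_iid_pmf d k))"
    by (rule stream_decomp) measurable
  also have "\<dots> = (\<integral>\<^sup>+a. (\<integral>\<^sup>+x. (if a \<le> s \<and> s < a + x then 1 else 0) \<partial>measure_pmf d) \<partial>measure_pmf (sum_iid_pmf d k))"
  proof (rule nn_integral_cong)
    fix a
    show "(\<integral>\<^sup>+\<omega>'. (if a \<le> s \<and> s < a + shd \<omega>' then 1 else 0) \<partial>stream_space (measure_pmf d)) =
      (\<integral>\<^sup>+x. (if a \<le> s \<and> s < a + x then 1 else 0) \<partial>measure_pmf d)"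
      using shd_int[where g="\<lambda>x. if a \<le> s \<and> s < a + x then 1 else 0" and d=d] by simp
  qed
  finally show ?thesis .
qed

lemma S_add:
  fixes \<zeta> :: "nat stream"
  shows "(\<Sum>i<b+x. \<zeta> !! i) = (\<Sum>i<b. \<zeta> !! i) + (\<Sum>i<x. sdrop b \<zeta> !! i)"
  by (induction x) (simp_all add: sdrop_snth)

lemma H2:
  fixes d :: "nat pmf"
  assumes "set_pmf d \<subseteq> {1..}"
  shows "(\<integral>\<^sup>+\<zeta>. (if b \<le> count_proc \<zeta> t \<and> count_proc \<zeta> t < b + x then 1 else 0) \<partial>stream_space (measure_pmf d)) =
    (\<integral>\<^sup>+a. (\<integral>\<^sup>+c. (if a \<le> t \<and> t < a + c then 1 else 0) \<partial>measure_pmf (sum_iid_pmf d x)) \<partial>measure_pmf (sum_iid_pmf d b))"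
proof -
  interpret S: prob_space "stream_space (measure_pmf d)" by (rule ps_stream)
  have "(\<integral>\<^sup>+\<zeta>. (if b \<le> count_proc \<zeta> t \<and> count_proc \<zeta> t < b + x then 1 else 0) \<partial>stream_space (measure_pmf d)) =
     (\<integral>\<^sup>+\<zeta>. (\<lambda>a \<zeta>'. if a \<le> t \<and> t < a + (\<Sum>i<x. \<zeta>' !! i) then 1 else 0 :: ennreal) (\<Sum>i<b. \<zeta> !! i) (sdrop b \<zeta>) \<partial>stream_space (measure_pmf d))"
  proof (rule nn_integral_cong_AE, use AE_pos[OF assms] in eventually_elim)
    case (elim \<zeta>)
    have "b \<le> count_proc \<zeta> t \<and> count_proc \<zeta> t < b + x \<longleftrightarrow>
          (\<Sum>i<b. \<zeta> !! i) \<le> t \<and> \<not> (\<Sum>i<b+x. \<zeta> !! i) \<le> t"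
      using count_ge[OF elim, of b t] count_ge[OF elim, of "b+x" t] by auto
    then show ?case by (simp add: S_add not_le)
  qed
  also have "\<dots> = (\<integral>\<^sup>+a. (\<integral>\<^sup>+\<zeta>'. (if a \<le> t \<and> t < a + (\<Sum>i<x. \<zeta>' !! i) then 1 else 0) \<partial>stream_space (measure_pmf d)) \<partial>measure_pmf (sum_iid_pmf d b))"
    by (rule stream_decomp) measurable
  also have "\<dots> = (\<integral>\<^sup>+a. (\<integral>\<^sup>+c. (if a \<le> t \<and> t < a + c then 1 else 0) \<partial>measure_pmf (sum_iid_pmf d x)) \<partial>measure_pmf (sum_iid_pmf d b))"
  proof (rule nn_integral_cong)
    fix a
    have "(\<integral>\<^sup>+\<zeta>'. (if a \<le> t \<and> t < a + (\<Sum>i<x. \<zeta>' !! i) then 1 else 0) \<partial>stream_space (measure_pmf d)) =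
      (\<integral>\<^sup>+c. (\<integral>\<^sup>+(_::nat stream). (if a \<le> t \<and> t < a + c then 1 else 0) \<partial>stream_space (measure_pmf d)) \<partial>measure_pmf (sum_iid_pmf d x))"
      using stream_decomp[where f="\<lambda>c (_::nat stream). if a \<le> t \<and> t < a + c then 1 else 0 :: ennreal" and d=d and k=x]
      by simp
    also have "\<dots> = (\<integral>\<^sup>+c. (if a \<le> t \<and> t < a + c then 1 else 0) \<partial>measure_pmf (sum_iid_pmf d x))"
      by (simp add: S.emeasure_space_1)
    finally show "(\<integral>\<^sup>+\<zeta>'. (if a \<le> t \<and> t < a + (\<Sum>i<x. \<zeta>' !! i) then 1 else 0) \<partial>stream_space (measure_pmf d)) =
      (\<integral>\<^sup>+c. (if a \<le> t \<and> t < a + c then 1 else 0) \<partial>measure_pmf (sum_iid_pmf d x))" .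
  qed
  finally show ?thesis .
qed

lemma pmf_sibuya: assumes "0 < \<alpha>" "\<alpha> < 1"
  shows "pmf (sibuya_pmf \<alpha>) k = (if k \<ge> 1 then (-1) ^ (k - 1) * (\<alpha> gchoose k) else 0)"
  unfolding sibuya_pmf_def
  by (rule pmf_embed_pmf) (use sibuya_valid[OF assms] in auto)

lemma set_geom1: assumes "0 < p" "p < 1" shows "set_pmf (geom1_pmf p) \<subseteq> {1..}"
proof
  fix x assume "x \<in> set_pmf (geom1_pmf p)"
  then have "pmf (geom1_pmf p) x \<noteq> 0" by (simp add: set_pmf_iff)
  then show "x \<in> {1..}" using pmf_geom1[OF assms, of x] by (auto split: if_splits)
qed

lemma set_sibuya: assumes "0 < \<alpha>" "\<alpha> < 1" shows "set_pmf (sibuya_pmf \<alpha>) \<subseteq> {1..}"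
proof
  fix x assume "x \<in> set_pmf (sibuya_pmf \<alpha>)"
  then have "pmf (sibuya_pmf \<alpha>) x \<noteq> 0" by (simp add: set_pmf_iff)
  then show "x \<in> {1..}" using pmf_sibuya[OF assms, of x] by (auto split: if_splits)
qed

lemma set_dml: assumes "0 < p" "p < 1" "0 < \<alpha>" "\<alpha> < 1" shows "set_pmf (dml_A_pmf p \<alpha>) \<subseteq> {1..}"
proof
  fix x assume "x \<in> set_pmf (dml_A_pmf p \<alpha>)"
  then obtain m where m: "m \<in> set_pmf (geom1_pmf p)" "x \<in> set_pmf (sum_iid_pmf (sibuya_pmf \<alpha>) m)"
    by (auto simp: dml_A_pmf_def)
  have "1 \<le> m" using m(1) set_geom1[OF assms(1,2)] by auto
  moreover have "m \<le> x" using m(2) set_sum_iid[OF set_sibuya[OF assms(3,4)], of m] by auto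
  ultimately show "x \<in> {1..}" by simp
qed

lemma emeasure_distr_single:
  assumes "F \<in> measurable M (count_space UNIV)"
  shows "emeasure (distr M (count_space UNIV) F) {k} = (\<integral>\<^sup>+z. indicator {k} (F z) \<partial>M)"
proof -
  have "emeasure (distr M (count_space UNIV) F) {k} = (\<integral>\<^sup>+x. indicator {k} x \<partial>distr M (count_space UNIV) F)"
    by (subst nn_integral_indicator) auto
  also have "\<dots> = (\<integral>\<^sup>+z. indicator {k} (F z) \<partial>M)"
    by (rule nn_integral_distr[OF assms]) simp
  finally show ?thesis .
qed

theorem mainTheorem7:
  fixes p \<alpha> :: real and t :: nat
  assumes "0 < p" "p < 1" "0 < \<alpha>" "\<alpha> < 1"
  shows "distr (stream_space (measure_pmf (geom1_pmf p)) \<Otimes>\<^sub>M stream_space (measure_pmf (sibuya_pmf \<alpha>)))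
            (count_space UNIV) (\<lambda>(\<omega>, \<zeta>). count_proc \<omega> (count_proc \<zeta> t))
       = distr (stream_space (measure_pmf (dml_A_pmf p \<alpha>)))
            (count_space UNIV) (\<lambda>\<omega>. count_proc \<omega> t)"
proof -
  define G where "G = geom1_pmf p"
  define Z where "Z = sibuya_pmf \<alpha>"
  define D where "D = dml_A_pmf p \<alpha>"
  define Gs where "Gs = stream_space (measure_pmf G)"
  define Zs where "Zs = stream_space (measure_pmf Z)"
  define I where "I = (\<lambda>a c. if a \<le> t \<and> t < a + c then 1 else 0 :: ennreal)"
  have sG: "set_pmf G \<subseteq> {1..}" unfolding G_def by (rule set_geom1) (use assms in auto)
  have sZ: "set_pmf Z \<subseteq> {1..}" unfolding Z_def by (rule set_sibuya) (use assms in auto)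
  have sD: "set_pmf D \<subseteq> {1..}" unfolding D_def by (rule set_dml) (use assms in auto)
  have Dk: "sum_iid_pmf D k = bind_pmf (sum_iid_pmf G k) (\<lambda>b. sum_iid_pmf Z b)" for k
    unfolding D_def dml_A_pmf_def G_def Z_def by (rule sum_iid_bind)
  have D1: "D = bind_pmf G (\<lambda>b. sum_iid_pmf Z b)"
    unfolding D_def dml_A_pmf_def G_def Z_def ..
  interpret P: pair_sigma_finite Gs Zs
    unfolding Gs_def Zs_def
    by (intro pair_sigma_finite.intro prob_space_imp_sigma_finite ps_stream)
  have measF: "(\<lambda>z. count_proc (fst z) (count_proc (snd z) t)) \<in> measurable (Gs \<Otimes>\<^sub>M Zs) (count_space UNIV)"
  proof (rule measurable_compose_countable'[where f="\<lambda>s z. count_proc (fst z) s" and I=UNIV])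
    show "(\<lambda>z. count_proc (fst z) s) \<in> measurable (Gs \<Otimes>\<^sub>M Zs) (count_space UNIV)" for s
      unfolding Gs_def by (rule measurable_compose[OF measurable_fst meas_cnt])
    show "(\<lambda>z. count_proc (snd z) t) \<in> measurable (Gs \<Otimes>\<^sub>M Zs) (count_space UNIV)"
      unfolding Zs_def by (rule measurable_compose[OF measurable_snd meas_cnt])
  qed simp
  have eqF: "(\<lambda>(\<omega>, \<zeta>). count_proc \<omega> (count_proc \<zeta> t)) = (\<lambda>z. count_proc (fst z) (count_proc (snd z) t))"
    by (rule ext) (simp split: prod.split)
  have measR: "(\<lambda>\<omega>. count_proc \<omega> t) \<in> measurable (stream_space (measure_pmf D)) (count_space UNIV)"
    by (rule meas_cnt)
  have LHS: "(\<integral>\<^sup>+z. indicator {k} (count_proc (fst z) (count_proc (snd z) t)) \<partial>(Gs \<Otimes>\<^sub>M Zs)) =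
     (\<integral>\<^sup>+b. (\<integral>\<^sup>+x. (\<integral>\<^sup>+a. (\<integral>\<^sup>+c. I a c \<partial>measure_pmf (sum_iid_pmf Z x)) \<partial>measure_pmf (sum_iid_pmf Z b)) \<partial>measure_pmf G) \<partial>measure_pmf (sum_iid_pmf G k))" for k
  proof -
    have "(\<integral>\<^sup>+z. indicator {k} (count_proc (fst z) (count_proc (snd z) t)) \<partial>(Gs \<Otimes>\<^sub>M Zs)) =
       (\<integral>\<^sup>+\<zeta>. (\<integral>\<^sup>+\<omega>. indicator {k} (count_proc \<omega> (count_proc \<zeta> t)) \<partial>Gs) \<partial>Zs)"
    proof -
      have mI: "(\<lambda>z. indicator {k} (count_proc (fst z) (count_proc (snd z) t)) :: ennreal) \<in> borel_measurable (Gs \<Otimes>\<^sub>M Zs)"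
        by (rule measurable_compose[OF measF]) simp
      show ?thesis by (subst P.nn_integral_snd[OF mI, symmetric]) simp
    qed
    also have "\<dots> = (\<integral>\<^sup>+\<zeta>. (\<integral>\<^sup>+b. (\<integral>\<^sup>+x. (if b \<le> count_proc \<zeta> t \<and> count_proc \<zeta> t < b + x then 1 else 0) \<partial>measure_pmf G) \<partial>measure_pmf (sum_iid_pmf G k)) \<partial>Zs)"
      unfolding Gs_def by (rule nn_integral_cong) (rule H1[OF sG])
    also have "\<dots> = (\<integral>\<^sup>+b. (\<integral>\<^sup>+\<zeta>. (\<integral>\<^sup>+x. (if b \<le> count_proc \<zeta> t \<and> count_proc \<zeta> t < b + x then 1 else 0) \<partial>measure_pmf G) \<partial>Zs) \<partial>measure_pmf (sum_iid_pmf G k))"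
      by (rule pmf_swap) (unfold Zs_def, rule measurable_compose[OF meas_cnt], simp)
    also have "\<dots> = (\<integral>\<^sup>+b. (\<integral>\<^sup>+x. (\<integral>\<^sup>+\<zeta>. (if b \<le> count_proc \<zeta> t \<and> count_proc \<zeta> t < b + x then 1 else 0) \<partial>Zs) \<partial>measure_pmf G) \<partial>measure_pmf (sum_iid_pmf G k))"
      by (intro nn_integral_cong pmf_swap) (unfold Zs_def, rule measurable_compose[OF meas_cnt], simp)
    also have "\<dots> = (\<integral>\<^sup>+b. (\<integral>\<^sup>+x. (\<integral>\<^sup>+a. (\<integral>\<^sup>+c. I a c \<partial>measure_pmf (sum_iid_pmf Z x)) \<partial>measure_pmf (sum_iid_pmf Z b)) \<partial>measure_pmf G) \<partial>measure_pmf (sum_iid_pmf G k))"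
      unfolding Zs_def I_def by (intro nn_integral_cong H2[OF sZ])
    finally show ?thesis .
  qed
  have RHS: "(\<integral>\<^sup>+\<omega>. indicator {k} (count_proc \<omega> t) \<partial>stream_space (measure_pmf D)) =
     (\<integral>\<^sup>+b. (\<integral>\<^sup>+x. (\<integral>\<^sup>+a. (\<integral>\<^sup>+c. I a c \<partial>measure_pmf (sum_iid_pmf Z x)) \<partial>measure_pmf (sum_iid_pmf Z b)) \<partial>measure_pmf G) \<partial>measure_pmf (sum_iid_pmf G k))" for k
  proof -
    have "(\<integral>\<^sup>+\<omega>. indicator {k} (count_proc \<omega> t) \<partial>stream_space (measure_pmf D)) =
      (\<integral>\<^sup>+a. (\<integral>\<^sup>+c. I a c \<partial>measure_pmf D) \<partial>measure_pmf (sum_iid_pmf D k))"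
      unfolding I_def by (rule H1[OF sD])
    also have "\<dots> = (\<integral>\<^sup>+b. (\<integral>\<^sup>+a. (\<integral>\<^sup>+x. (\<integral>\<^sup>+c. I a c \<partial>measure_pmf (sum_iid_pmf Z x)) \<partial>measure_pmf G) \<partial>measure_pmf (sum_iid_pmf Z b)) \<partial>measure_pmf (sum_iid_pmf G k))"
      unfolding Dk by (simp add: D1)
    also have "\<dots> = (\<integral>\<^sup>+b. (\<integral>\<^sup>+x. (\<integral>\<^sup>+a. (\<integral>\<^sup>+c. I a c \<partial>measure_pmf (sum_iid_pmf Z x)) \<partial>measure_pmf (sum_iid_pmf Z b)) \<partial>measure_pmf G) \<partial>measure_pmf (sum_iid_pmf G k))"
      by (intro nn_integral_cong pmf_swap) simp
    finally show ?thesis .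
  qed
  show ?thesis
    unfolding eqF G_def[symmetric] Z_def[symmetric] D_def[symmetric] Gs_def[symmetric] Zs_def[symmetric]
  proof (rule measure_eqI_countable[where A=UNIV])
    fix k :: nat
    show "emeasure (distr (Gs \<Otimes>\<^sub>M Zs) (count_space UNIV) (\<lambda>z. count_proc (fst z) (count_proc (snd z) t))) {k} =
          emeasure (distr (stream_space (measure_pmf D)) (count_space UNIV) (\<lambda>\<omega>. count_proc \<omega> t)) {k}"
      unfolding emeasure_distr_single[OF measF] emeasure_distr_single[OF measR] LHS RHS ..
  qed auto
qed

end
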